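(* Let $n=4$. List the eight tilings, encoded as 0/1 strings indicating membership of $123,124,134,234$ respectively, in the cyclic order (the octahedral wheel) $0000,1000,1100,1110,1111,0111,0011,0001$ (and back to $0000$). Then the maximal (by inclusion) Condorcet super-domains are exactly: (I) the sets of five cyclically consecutive tilings in this cyclic order, and (II) the sets consisting of two distinct pairs $\{T,\Lambda\setminus T\}$, $\{T',\Lambda\setminus T'\}$ of opposite tilings. Moreover, if $\mathbf D$ is a set of one of these two types, then for every finite set $V$ of odd cardinality and every family $(T_v)_{v\in V}$ of tilings in $\mathbf D$, $sm((T_v)_{v\in V})=T_w$ for some $w\in V$.
   Context: Here $n=4$, $\Lambda$ is the set of 3-element subsets $\{123,124,134,234\}$ of $\{1,2,3,4\}$, and a tiling is a subset $T\subseteq\Lambda$ which is an initial or final segment of the sequence $(123,124,134,234)$ (empty set and $\Lambda$ allowed); there are exactly eight tilings. For a finite set $V$ of odd cardinality and tilings $(T_v)_{v\in V}$, $sm((T_v)_{v\in V})$ is the set of triples lying in $T_v$ for more than $|V|/2$ indices $v$. A set $\mathbf D$ of tilings is a Condorcet super-domain if for every finite $V$ of odd cardinality and every family $(T_v)_{v\in V}$ with all $T_v\in\mathbf D$, $sm((T_v)_{v\in V})$ is a tiling. *)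

theory Defs
  imports Main
begin

definition t123 :: "nat set" where "t123 = {1,2,3}"
definition t124 :: "nat set" where "t124 = {1,2,4}"
definition t134 :: "nat set" where "t134 = {1,3,4}"
definition t234 :: "nat set" where "t234 = {2,3,4}"

definition triple_seq :: "nat set list" where
  "triple_seq = [t123, t124, t134, t234]"

definition Lambda :: "nat set set" where
  "Lambda = set triple_seq"

definition is_tiling :: "nat set set \<Rightarrow> bool" where
  "is_tiling T \<longleftrightarrow> (\<exists>k\<le>4. T = set (take k triple_seq) \<or> T = set (drop k triple_seq))"

definition sm :: "'v set \<Rightarrow> ('v \<Rightarrow> nat set set) \<Rightarrow> nat set set" where
  "sm V T = {t \<in> Lambda. 2 * card {v \<in> V. t \<in> T v} > card V}"

text \<open>Condorcet super-domain. Finite index sets V are taken inside nat;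
  every finite set is in bijection with a finite subset of nat.\<close>
definition condorcet_super_domain :: "nat set set set \<Rightarrow> bool" where
  "condorcet_super_domain D \<longleftrightarrow>
     (\<forall>T\<in>D. is_tiling T) \<and>
     (\<forall>(V::nat set) T. finite V \<and> odd (card V) \<and> (\<forall>v\<in>V. T v \<in> D) \<longrightarrow> is_tiling (sm V T))"

definition maximal_condorcet_super_domain :: "nat set set set \<Rightarrow> bool" where
  "maximal_condorcet_super_domain D \<longleftrightarrow>
     condorcet_super_domain D \<and>
     (\<forall>D'. condorcet_super_domain D' \<and> D \<subseteq> D' \<longrightarrow> D' = D)"

definition wheel_list :: "nat set set list" where
  "wheel_list = [{}, {t123}, {t123, t124}, {t123, t124, t134}, {t123, t124, t134, t234},
                 {t124, t134, t234}, {t134, t234}, {t234}]"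

definition wheel :: "nat \<Rightarrow> nat set set" where
  "wheel i = wheel_list ! (i mod 8)"

definition type_I :: "nat set set set \<Rightarrow> bool" where
  "type_I D \<longleftrightarrow> (\<exists>i<8. D = {wheel (i + j) | j. j < 5})"

definition type_II :: "nat set set set \<Rightarrow> bool" where
  "type_II D \<longleftrightarrow> (\<exists>T T'. is_tiling T \<and> is_tiling T' \<and>
      {T, Lambda - T} \<noteq> {T', Lambda - T'} \<and>
      D = {T, Lambda - T} \<union> {T', Lambda - T'})"

end

theory Submission
  imports Defs
begin


lemma neqI: "(a::nat) \<in> X \<Longrightarrow> a \<notin> Y \<Longrightarrow> X \<noteq> Y" by blast

lemma t_distinct0: "t123 \<noteq> t124" "t123 \<noteq> t134" "t123 \<noteq> t234" "t124 \<noteq> t134" "t124 \<noteq> t234" "t134 \<noteq> t234"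
  apply (rule neqI[of 3]; simp add: t123_def t124_def t134_def t234_def)
  apply (rule neqI[of 2]; simp add: t123_def t124_def t134_def t234_def)
  apply (rule neqI[of 1]; simp add: t123_def t124_def t134_def t234_def)
  apply (rule neqI[of 2]; simp add: t123_def t124_def t134_def t234_def)
  apply (rule neqI[of 1]; simp add: t123_def t124_def t134_def t234_def)
  apply (rule neqI[of 1]; simp add: t123_def t124_def t134_def t234_def)
  done

lemmas t_distinct = t_distinct0 t_distinct0[symmetric]

lemma Lambda_eq: "Lambda = {t123, t124, t134, t234}"
  by (simp add: Lambda_def triple_seq_def)

lemma wheel_vals: "wheel 0 = {}" "wheel 1 = {t123}" "wheel 2 = {t123, t124}" "wheel 3 = {t123, t124, t134}"
  "wheel 4 = {t123, t124, t134, t234}" "wheel 5 = {t124, t134, t234}" "wheel 6 = {t134, t234}" "wheel 7 = {t234}"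
  "wheel (Suc 0) = {t123}" "wheel 8 = wheel 0" "wheel 9 = wheel 1" "wheel 10 = wheel 2" "wheel 11 = wheel 3"
  by (simp_all add: wheel_def wheel_list_def)

lemma less8: "(i::nat) < 8 \<longleftrightarrow> i = 0 \<or> i = 1 \<or> i = 2 \<or> i = 3 \<or> i = 4 \<or> i = 5 \<or> i = 6 \<or> i = 7"
  by auto

lemma mem_wheel:
  assumes "i < 8"
  shows "t123 \<in> wheel i \<longleftrightarrow> 1 \<le> i \<and> i \<le> 4"
    "t124 \<in> wheel i \<longleftrightarrow> 2 \<le> i \<and> i \<le> 5"
    "t134 \<in> wheel i \<longleftrightarrow> 3 \<le> i \<and> i \<le> 6"
    "t234 \<in> wheel i \<longleftrightarrow> 4 \<le> i \<and> i \<le> 7"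
  using assms unfolding less8 by (auto simp: wheel_vals t_distinct)

lemma wheel_sub: "i < 8 \<Longrightarrow> wheel i \<subseteq> Lambda"
  unfolding less8 by (auto simp: wheel_vals Lambda_eq)

lemma sub_Lambda_eq:
  assumes "X \<subseteq> Lambda" "Y \<subseteq> Lambda"
    "t123 \<in> X \<longleftrightarrow> t123 \<in> Y" "t124 \<in> X \<longleftrightarrow> t124 \<in> Y"
    "t134 \<in> X \<longleftrightarrow> t134 \<in> Y" "t234 \<in> X \<longleftrightarrow> t234 \<in> Y"
  shows "X = Y"
  using assms unfolding Lambda_eq by blast

lemma wheel_inj: "i < 8 \<Longrightarrow> j < 8 \<Longrightarrow> wheel i = wheel j \<longleftrightarrow> i = j"
proof
  assume a: "i < 8" "j < 8" "wheel i = wheel j"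
  have "t123 \<in> wheel i \<longleftrightarrow> t123 \<in> wheel j" "t124 \<in> wheel i \<longleftrightarrow> t124 \<in> wheel j"
     "t134 \<in> wheel i \<longleftrightarrow> t134 \<in> wheel j" "t234 \<in> wheel i \<longleftrightarrow> t234 \<in> wheel j" using a by auto
  then have "(1 \<le> i \<and> i \<le> 4) = (1 \<le> j \<and> j \<le> 4)" "(2 \<le> i \<and> i \<le> 5) = (2 \<le> j \<and> j \<le> 5)"
     "(3 \<le> i \<and> i \<le> 6) = (3 \<le> j \<and> j \<le> 6)" "(4 \<le> i \<and> i \<le> 7) = (4 \<le> j \<and> j \<le> 7)"
    by (simp_all only: mem_wheel[OF a(1)] mem_wheel[OF a(2)])
  note h = this
  from a(1) have "i = 0 \<or> i = 1 \<or> i = 2 \<or> i = 3 \<or> i = 4 \<or> i = 5 \<or> i = 6 \<or> i = 7" by (simp only: less8)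
  then show "i = j" using h a(2) by (elim disjE; simp; linarith)
qed simp


lemma tk: "set (take 0 triple_seq) = wheel 0" "set (take 1 triple_seq) = wheel 1" "set (take 2 triple_seq) = wheel 2"
  "set (take 3 triple_seq) = wheel 3" "set (take 4 triple_seq) = wheel 4" "set (drop 0 triple_seq) = wheel 4"
  "set (drop 1 triple_seq) = wheel 5" "set (drop 2 triple_seq) = wheel 6" "set (drop 3 triple_seq) = wheel 7"
  "set (drop 4 triple_seq) = wheel 0"
  by (simp_all add: triple_seq_def wheel_vals)

lemma tiling_iff: "is_tiling X \<longleftrightarrow> (\<exists>i<8. X = wheel i)"
proof -
  have k: "(\<exists>k\<le>4. P k) \<longleftrightarrow> P 0 \<or> P 1 \<or> P 2 \<or> P 3 \<or> P (4::nat)" for P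
  proof -
    have le4: "(k::nat) \<le> 4 \<longleftrightarrow> k = 0 \<or> k = 1 \<or> k = 2 \<or> k = 3 \<or> k = 4" for k by auto
    show ?thesis by (simp only: le4 conj_disj_distribR ex_disj_distrib simp_thms)
  qed
  have e: "(\<exists>i<8. P i) \<longleftrightarrow> P 0 \<or> P 1 \<or> P 2 \<or> P 3 \<or> P 4 \<or> P 5 \<or> P 6 \<or> P (7::nat)" for P
    unfolding less8 by auto
  show ?thesis unfolding is_tiling_def k e
    by (simp only: tk) blast
qed


lemma compl_wheel: "i < 8 \<Longrightarrow> Lambda - wheel i = wheel ((i + 4) mod 8)"
  unfolding less8 by (elim disjE; simp add: wheel_vals Lambda_eq t_distinct insert_Diff_if)

lemma filter_insert: "{x. x \<in> insert a A \<and> P x} = (if P a then insert a {x. x \<in> A \<and> P x} else {x. x \<in> A \<and> P x})"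
  by auto

lemma card3: "card {v \<in> {0,1,2::nat}. P v} = (if P 0 then 1 else 0) + (if P 1 then 1 else 0) + (if P 2 then 1 else 0)"
  by (simp only: filter_insert) (cases "P 0"; cases "P 1"; cases "P 2"; simp)


definition TIdx :: "nat set set" where "TIdx = {{0,1,2,3,4}, {1,2,3,4,5}, {2,3,4,5,6}, {3,4,5,6,7}, {4,5,6,7,0}, {5,6,7,0,1}, {6,7,0,1,2}, {7,0,1,2,3}}"
definition TIIdx :: "nat set set" where "TIIdx = {{0,4,1,5}, {0,4,2,6}, {0,4,3,7}, {1,5,2,6}, {1,5,3,7}, {2,6,3,7}}"
lemma core_0:
  fixes c :: "nat \<Rightarrow> nat"
  assumes "N = c 0 + c 1 + c 2 + c 3 + c 4 + c 5 + c 6 + c 7" "0 < N"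
   "N < 2*(c 1 + c 2 + c 3 + c 4) \<or> (\<not> N < 2*(c 1 + c 2 + c 3 + c 4) \<and> 2*(c 1 + c 2 + c 3 + c 4) < N)"
   "N < 2*(c 2 + c 3 + c 4 + c 5) \<or> (\<not> N < 2*(c 2 + c 3 + c 4 + c 5) \<and> 2*(c 2 + c 3 + c 4 + c 5) < N)"
   "N < 2*(c 3 + c 4 + c 5 + c 6) \<or> (\<not> N < 2*(c 3 + c 4 + c 5 + c 6) \<and> 2*(c 3 + c 4 + c 5 + c 6) < N)"
   "N < 2*(c 4 + c 5 + c 6 + c 7) \<or> (\<not> N < 2*(c 4 + c 5 + c 6 + c 7) \<and> 2*(c 4 + c 5 + c 6 + c 7) < N)" "c 5 = 0" "c 6 = 0" "c 7 = 0"
  shows "(\<exists>j\<in>{0,1,2,3,4}. 0 < c j \<and> (N < 2*(c 1 + c 2 + c 3 + c 4) \<longleftrightarrow> 1 \<le> j \<and> j \<le> 4) \<and> (N < 2*(c 2 + c 3 + c 4 + c 5) \<longleftrightarrow> 2 \<le> j \<and> j \<le> 5) \<and> (N < 2*(c 3 + c 4 + c 5 + c 6) \<longleftrightarrow> 3 \<le> j \<and> j \<le> 6) \<and> (N < 2*(c 4 + c 5 + c 6 + c 7) \<longleftrightarrow> 4 \<le> j \<and> j \<le> 7))"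
  using assms(1,2) assms(7-) assms(3-6) by (elim disjE conjE; simp; linarith)

lemma core_1:
  fixes c :: "nat \<Rightarrow> nat"
  assumes "N = c 0 + c 1 + c 2 + c 3 + c 4 + c 5 + c 6 + c 7" "0 < N"
   "N < 2*(c 1 + c 2 + c 3 + c 4) \<or> (\<not> N < 2*(c 1 + c 2 + c 3 + c 4) \<and> 2*(c 1 + c 2 + c 3 + c 4) < N)"
   "N < 2*(c 2 + c 3 + c 4 + c 5) \<or> (\<not> N < 2*(c 2 + c 3 + c 4 + c 5) \<and> 2*(c 2 + c 3 + c 4 + c 5) < N)"
   "N < 2*(c 3 + c 4 + c 5 + c 6) \<or> (\<not> N < 2*(c 3 + c 4 + c 5 + c 6) \<and> 2*(c 3 + c 4 + c 5 + c 6) < N)"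
   "N < 2*(c 4 + c 5 + c 6 + c 7) \<or> (\<not> N < 2*(c 4 + c 5 + c 6 + c 7) \<and> 2*(c 4 + c 5 + c 6 + c 7) < N)" "c 0 = 0" "c 6 = 0" "c 7 = 0"
  shows "(\<exists>j\<in>{1,2,3,4,5}. 0 < c j \<and> (N < 2*(c 1 + c 2 + c 3 + c 4) \<longleftrightarrow> 1 \<le> j \<and> j \<le> 4) \<and> (N < 2*(c 2 + c 3 + c 4 + c 5) \<longleftrightarrow> 2 \<le> j \<and> j \<le> 5) \<and> (N < 2*(c 3 + c 4 + c 5 + c 6) \<longleftrightarrow> 3 \<le> j \<and> j \<le> 6) \<and> (N < 2*(c 4 + c 5 + c 6 + c 7) \<longleftrightarrow> 4 \<le> j \<and> j \<le> 7))"
  using assms(1,2) assms(7-) assms(3-6) by (elim disjE conjE; simp; linarith)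

lemma core_2:
  fixes c :: "nat \<Rightarrow> nat"
  assumes "N = c 0 + c 1 + c 2 + c 3 + c 4 + c 5 + c 6 + c 7" "0 < N"
   "N < 2*(c 1 + c 2 + c 3 + c 4) \<or> (\<not> N < 2*(c 1 + c 2 + c 3 + c 4) \<and> 2*(c 1 + c 2 + c 3 + c 4) < N)"
   "N < 2*(c 2 + c 3 + c 4 + c 5) \<or> (\<not> N < 2*(c 2 + c 3 + c 4 + c 5) \<and> 2*(c 2 + c 3 + c 4 + c 5) < N)"
   "N < 2*(c 3 + c 4 + c 5 + c 6) \<or> (\<not> N < 2*(c 3 + c 4 + c 5 + c 6) \<and> 2*(c 3 + c 4 + c 5 + c 6) < N)"
   "N < 2*(c 4 + c 5 + c 6 + c 7) \<or> (\<not> N < 2*(c 4 + c 5 + c 6 + c 7) \<and> 2*(c 4 + c 5 + c 6 + c 7) < N)" "c 0 = 0" "c 1 = 0" "c 7 = 0"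
  shows "(\<exists>j\<in>{2,3,4,5,6}. 0 < c j \<and> (N < 2*(c 1 + c 2 + c 3 + c 4) \<longleftrightarrow> 1 \<le> j \<and> j \<le> 4) \<and> (N < 2*(c 2 + c 3 + c 4 + c 5) \<longleftrightarrow> 2 \<le> j \<and> j \<le> 5) \<and> (N < 2*(c 3 + c 4 + c 5 + c 6) \<longleftrightarrow> 3 \<le> j \<and> j \<le> 6) \<and> (N < 2*(c 4 + c 5 + c 6 + c 7) \<longleftrightarrow> 4 \<le> j \<and> j \<le> 7))"
  using assms(1,2) assms(7-) assms(3-6) by (elim disjE conjE; simp; linarith)

lemma core_3:
  fixes c :: "nat \<Rightarrow> nat"
  assumes "N = c 0 + c 1 + c 2 + c 3 + c 4 + c 5 + c 6 + c 7" "0 < N"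
   "N < 2*(c 1 + c 2 + c 3 + c 4) \<or> (\<not> N < 2*(c 1 + c 2 + c 3 + c 4) \<and> 2*(c 1 + c 2 + c 3 + c 4) < N)"
   "N < 2*(c 2 + c 3 + c 4 + c 5) \<or> (\<not> N < 2*(c 2 + c 3 + c 4 + c 5) \<and> 2*(c 2 + c 3 + c 4 + c 5) < N)"
   "N < 2*(c 3 + c 4 + c 5 + c 6) \<or> (\<not> N < 2*(c 3 + c 4 + c 5 + c 6) \<and> 2*(c 3 + c 4 + c 5 + c 6) < N)"
   "N < 2*(c 4 + c 5 + c 6 + c 7) \<or> (\<not> N < 2*(c 4 + c 5 + c 6 + c 7) \<and> 2*(c 4 + c 5 + c 6 + c 7) < N)" "c 0 = 0" "c 1 = 0" "c 2 = 0"
  shows "(\<exists>j\<in>{3,4,5,6,7}. 0 < c j \<and> (N < 2*(c 1 + c 2 + c 3 + c 4) \<longleftrightarrow> 1 \<le> j \<and> j \<le> 4) \<and> (N < 2*(c 2 + c 3 + c 4 + c 5) \<longleftrightarrow> 2 \<le> j \<and> j \<le> 5) \<and> (N < 2*(c 3 + c 4 + c 5 + c 6) \<longleftrightarrow> 3 \<le> j \<and> j \<le> 6) \<and> (N < 2*(c 4 + c 5 + c 6 + c 7) \<longleftrightarrow> 4 \<le> j \<and> j \<le> 7))"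
  using assms(1,2) assms(7-) assms(3-6) by (elim disjE conjE; simp; linarith)

lemma core_4:
  fixes c :: "nat \<Rightarrow> nat"
  assumes "N = c 0 + c 1 + c 2 + c 3 + c 4 + c 5 + c 6 + c 7" "0 < N"
   "N < 2*(c 1 + c 2 + c 3 + c 4) \<or> (\<not> N < 2*(c 1 + c 2 + c 3 + c 4) \<and> 2*(c 1 + c 2 + c 3 + c 4) < N)"
   "N < 2*(c 2 + c 3 + c 4 + c 5) \<or> (\<not> N < 2*(c 2 + c 3 + c 4 + c 5) \<and> 2*(c 2 + c 3 + c 4 + c 5) < N)"
   "N < 2*(c 3 + c 4 + c 5 + c 6) \<or> (\<not> N < 2*(c 3 + c 4 + c 5 + c 6) \<and> 2*(c 3 + c 4 + c 5 + c 6) < N)"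
   "N < 2*(c 4 + c 5 + c 6 + c 7) \<or> (\<not> N < 2*(c 4 + c 5 + c 6 + c 7) \<and> 2*(c 4 + c 5 + c 6 + c 7) < N)" "c 1 = 0" "c 2 = 0" "c 3 = 0"
  shows "(\<exists>j\<in>{4,5,6,7,0}. 0 < c j \<and> (N < 2*(c 1 + c 2 + c 3 + c 4) \<longleftrightarrow> 1 \<le> j \<and> j \<le> 4) \<and> (N < 2*(c 2 + c 3 + c 4 + c 5) \<longleftrightarrow> 2 \<le> j \<and> j \<le> 5) \<and> (N < 2*(c 3 + c 4 + c 5 + c 6) \<longleftrightarrow> 3 \<le> j \<and> j \<le> 6) \<and> (N < 2*(c 4 + c 5 + c 6 + c 7) \<longleftrightarrow> 4 \<le> j \<and> j \<le> 7))"
  using assms(1,2) assms(7-) assms(3-6) by (elim disjE conjE; simp; linarith)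

lemma core_5:
  fixes c :: "nat \<Rightarrow> nat"
  assumes "N = c 0 + c 1 + c 2 + c 3 + c 4 + c 5 + c 6 + c 7" "0 < N"
   "N < 2*(c 1 + c 2 + c 3 + c 4) \<or> (\<not> N < 2*(c 1 + c 2 + c 3 + c 4) \<and> 2*(c 1 + c 2 + c 3 + c 4) < N)"
   "N < 2*(c 2 + c 3 + c 4 + c 5) \<or> (\<not> N < 2*(c 2 + c 3 + c 4 + c 5) \<and> 2*(c 2 + c 3 + c 4 + c 5) < N)"
   "N < 2*(c 3 + c 4 + c 5 + c 6) \<or> (\<not> N < 2*(c 3 + c 4 + c 5 + c 6) \<and> 2*(c 3 + c 4 + c 5 + c 6) < N)"
   "N < 2*(c 4 + c 5 + c 6 + c 7) \<or> (\<not> N < 2*(c 4 + c 5 + c 6 + c 7) \<and> 2*(c 4 + c 5 + c 6 + c 7) < N)" "c 2 = 0" "c 3 = 0" "c 4 = 0"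
  shows "(\<exists>j\<in>{5,6,7,0,1}. 0 < c j \<and> (N < 2*(c 1 + c 2 + c 3 + c 4) \<longleftrightarrow> 1 \<le> j \<and> j \<le> 4) \<and> (N < 2*(c 2 + c 3 + c 4 + c 5) \<longleftrightarrow> 2 \<le> j \<and> j \<le> 5) \<and> (N < 2*(c 3 + c 4 + c 5 + c 6) \<longleftrightarrow> 3 \<le> j \<and> j \<le> 6) \<and> (N < 2*(c 4 + c 5 + c 6 + c 7) \<longleftrightarrow> 4 \<le> j \<and> j \<le> 7))"
  using assms(1,2) assms(7-) assms(3-6) by (elim disjE conjE; simp; linarith)

lemma core_6:
  fixes c :: "nat \<Rightarrow> nat"
  assumes "N = c 0 + c 1 + c 2 + c 3 + c 4 + c 5 + c 6 + c 7" "0 < N"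
   "N < 2*(c 1 + c 2 + c 3 + c 4) \<or> (\<not> N < 2*(c 1 + c 2 + c 3 + c 4) \<and> 2*(c 1 + c 2 + c 3 + c 4) < N)"
   "N < 2*(c 2 + c 3 + c 4 + c 5) \<or> (\<not> N < 2*(c 2 + c 3 + c 4 + c 5) \<and> 2*(c 2 + c 3 + c 4 + c 5) < N)"
   "N < 2*(c 3 + c 4 + c 5 + c 6) \<or> (\<not> N < 2*(c 3 + c 4 + c 5 + c 6) \<and> 2*(c 3 + c 4 + c 5 + c 6) < N)"
   "N < 2*(c 4 + c 5 + c 6 + c 7) \<or> (\<not> N < 2*(c 4 + c 5 + c 6 + c 7) \<and> 2*(c 4 + c 5 + c 6 + c 7) < N)" "c 3 = 0" "c 4 = 0" "c 5 = 0"
  shows "(\<exists>j\<in>{6,7,0,1,2}. 0 < c j \<and> (N < 2*(c 1 + c 2 + c 3 + c 4) \<longleftrightarrow> 1 \<le> j \<and> j \<le> 4) \<and> (N < 2*(c 2 + c 3 + c 4 + c 5) \<longleftrightarrow> 2 \<le> j \<and> j \<le> 5) \<and> (N < 2*(c 3 + c 4 + c 5 + c 6) \<longleftrightarrow> 3 \<le> j \<and> j \<le> 6) \<and> (N < 2*(c 4 + c 5 + c 6 + c 7) \<longleftrightarrow> 4 \<le> j \<and> j \<le> 7))"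
  using assms(1,2) assms(7-) assms(3-6) by (elim disjE conjE; simp; linarith)

lemma core_7:
  fixes c :: "nat \<Rightarrow> nat"
  assumes "N = c 0 + c 1 + c 2 + c 3 + c 4 + c 5 + c 6 + c 7" "0 < N"
   "N < 2*(c 1 + c 2 + c 3 + c 4) \<or> (\<not> N < 2*(c 1 + c 2 + c 3 + c 4) \<and> 2*(c 1 + c 2 + c 3 + c 4) < N)"
   "N < 2*(c 2 + c 3 + c 4 + c 5) \<or> (\<not> N < 2*(c 2 + c 3 + c 4 + c 5) \<and> 2*(c 2 + c 3 + c 4 + c 5) < N)"
   "N < 2*(c 3 + c 4 + c 5 + c 6) \<or> (\<not> N < 2*(c 3 + c 4 + c 5 + c 6) \<and> 2*(c 3 + c 4 + c 5 + c 6) < N)"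
   "N < 2*(c 4 + c 5 + c 6 + c 7) \<or> (\<not> N < 2*(c 4 + c 5 + c 6 + c 7) \<and> 2*(c 4 + c 5 + c 6 + c 7) < N)" "c 4 = 0" "c 5 = 0" "c 6 = 0"
  shows "(\<exists>j\<in>{7,0,1,2,3}. 0 < c j \<and> (N < 2*(c 1 + c 2 + c 3 + c 4) \<longleftrightarrow> 1 \<le> j \<and> j \<le> 4) \<and> (N < 2*(c 2 + c 3 + c 4 + c 5) \<longleftrightarrow> 2 \<le> j \<and> j \<le> 5) \<and> (N < 2*(c 3 + c 4 + c 5 + c 6) \<longleftrightarrow> 3 \<le> j \<and> j \<le> 6) \<and> (N < 2*(c 4 + c 5 + c 6 + c 7) \<longleftrightarrow> 4 \<le> j \<and> j \<le> 7))"
  using assms(1,2) assms(7-) assms(3-6) by (elim disjE conjE; simp; linarith)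

lemma core_8:
  fixes c :: "nat \<Rightarrow> nat"
  assumes "N = c 0 + c 1 + c 2 + c 3 + c 4 + c 5 + c 6 + c 7" "0 < N"
   "N < 2*(c 1 + c 2 + c 3 + c 4) \<or> (\<not> N < 2*(c 1 + c 2 + c 3 + c 4) \<and> 2*(c 1 + c 2 + c 3 + c 4) < N)"
   "N < 2*(c 2 + c 3 + c 4 + c 5) \<or> (\<not> N < 2*(c 2 + c 3 + c 4 + c 5) \<and> 2*(c 2 + c 3 + c 4 + c 5) < N)"
   "N < 2*(c 3 + c 4 + c 5 + c 6) \<or> (\<not> N < 2*(c 3 + c 4 + c 5 + c 6) \<and> 2*(c 3 + c 4 + c 5 + c 6) < N)"
   "N < 2*(c 4 + c 5 + c 6 + c 7) \<or> (\<not> N < 2*(c 4 + c 5 + c 6 + c 7) \<and> 2*(c 4 + c 5 + c 6 + c 7) < N)" "c 2 = 0" "c 3 = 0" "c 6 = 0" "c 7 = 0"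
  shows "(\<exists>j\<in>{0,4,1,5}. 0 < c j \<and> (N < 2*(c 1 + c 2 + c 3 + c 4) \<longleftrightarrow> 1 \<le> j \<and> j \<le> 4) \<and> (N < 2*(c 2 + c 3 + c 4 + c 5) \<longleftrightarrow> 2 \<le> j \<and> j \<le> 5) \<and> (N < 2*(c 3 + c 4 + c 5 + c 6) \<longleftrightarrow> 3 \<le> j \<and> j \<le> 6) \<and> (N < 2*(c 4 + c 5 + c 6 + c 7) \<longleftrightarrow> 4 \<le> j \<and> j \<le> 7))"
  using assms(1,2) assms(7-) assms(3-6) by (elim disjE conjE; simp; linarith)

lemma core_9:
  fixes c :: "nat \<Rightarrow> nat"
  assumes "N = c 0 + c 1 + c 2 + c 3 + c 4 + c 5 + c 6 + c 7" "0 < N"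
   "N < 2*(c 1 + c 2 + c 3 + c 4) \<or> (\<not> N < 2*(c 1 + c 2 + c 3 + c 4) \<and> 2*(c 1 + c 2 + c 3 + c 4) < N)"
   "N < 2*(c 2 + c 3 + c 4 + c 5) \<or> (\<not> N < 2*(c 2 + c 3 + c 4 + c 5) \<and> 2*(c 2 + c 3 + c 4 + c 5) < N)"
   "N < 2*(c 3 + c 4 + c 5 + c 6) \<or> (\<not> N < 2*(c 3 + c 4 + c 5 + c 6) \<and> 2*(c 3 + c 4 + c 5 + c 6) < N)"
   "N < 2*(c 4 + c 5 + c 6 + c 7) \<or> (\<not> N < 2*(c 4 + c 5 + c 6 + c 7) \<and> 2*(c 4 + c 5 + c 6 + c 7) < N)" "c 1 = 0" "c 3 = 0" "c 5 = 0" "c 7 = 0"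
  shows "(\<exists>j\<in>{0,4,2,6}. 0 < c j \<and> (N < 2*(c 1 + c 2 + c 3 + c 4) \<longleftrightarrow> 1 \<le> j \<and> j \<le> 4) \<and> (N < 2*(c 2 + c 3 + c 4 + c 5) \<longleftrightarrow> 2 \<le> j \<and> j \<le> 5) \<and> (N < 2*(c 3 + c 4 + c 5 + c 6) \<longleftrightarrow> 3 \<le> j \<and> j \<le> 6) \<and> (N < 2*(c 4 + c 5 + c 6 + c 7) \<longleftrightarrow> 4 \<le> j \<and> j \<le> 7))"
  using assms(1,2) assms(7-) assms(3-6) by (elim disjE conjE; simp; linarith)

lemma core_10:
  fixes c :: "nat \<Rightarrow> nat"
  assumes "N = c 0 + c 1 + c 2 + c 3 + c 4 + c 5 + c 6 + c 7" "0 < N"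
   "N < 2*(c 1 + c 2 + c 3 + c 4) \<or> (\<not> N < 2*(c 1 + c 2 + c 3 + c 4) \<and> 2*(c 1 + c 2 + c 3 + c 4) < N)"
   "N < 2*(c 2 + c 3 + c 4 + c 5) \<or> (\<not> N < 2*(c 2 + c 3 + c 4 + c 5) \<and> 2*(c 2 + c 3 + c 4 + c 5) < N)"
   "N < 2*(c 3 + c 4 + c 5 + c 6) \<or> (\<not> N < 2*(c 3 + c 4 + c 5 + c 6) \<and> 2*(c 3 + c 4 + c 5 + c 6) < N)"
   "N < 2*(c 4 + c 5 + c 6 + c 7) \<or> (\<not> N < 2*(c 4 + c 5 + c 6 + c 7) \<and> 2*(c 4 + c 5 + c 6 + c 7) < N)" "c 1 = 0" "c 2 = 0" "c 5 = 0" "c 6 = 0"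
  shows "(\<exists>j\<in>{0,4,3,7}. 0 < c j \<and> (N < 2*(c 1 + c 2 + c 3 + c 4) \<longleftrightarrow> 1 \<le> j \<and> j \<le> 4) \<and> (N < 2*(c 2 + c 3 + c 4 + c 5) \<longleftrightarrow> 2 \<le> j \<and> j \<le> 5) \<and> (N < 2*(c 3 + c 4 + c 5 + c 6) \<longleftrightarrow> 3 \<le> j \<and> j \<le> 6) \<and> (N < 2*(c 4 + c 5 + c 6 + c 7) \<longleftrightarrow> 4 \<le> j \<and> j \<le> 7))"
  using assms(1,2) assms(7-) assms(3-6) by (elim disjE conjE; simp; linarith)

lemma core_11:
  fixes c :: "nat \<Rightarrow> nat"
  assumes "N = c 0 + c 1 + c 2 + c 3 + c 4 + c 5 + c 6 + c 7" "0 < N"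
   "N < 2*(c 1 + c 2 + c 3 + c 4) \<or> (\<not> N < 2*(c 1 + c 2 + c 3 + c 4) \<and> 2*(c 1 + c 2 + c 3 + c 4) < N)"
   "N < 2*(c 2 + c 3 + c 4 + c 5) \<or> (\<not> N < 2*(c 2 + c 3 + c 4 + c 5) \<and> 2*(c 2 + c 3 + c 4 + c 5) < N)"
   "N < 2*(c 3 + c 4 + c 5 + c 6) \<or> (\<not> N < 2*(c 3 + c 4 + c 5 + c 6) \<and> 2*(c 3 + c 4 + c 5 + c 6) < N)"
   "N < 2*(c 4 + c 5 + c 6 + c 7) \<or> (\<not> N < 2*(c 4 + c 5 + c 6 + c 7) \<and> 2*(c 4 + c 5 + c 6 + c 7) < N)" "c 0 = 0" "c 3 = 0" "c 4 = 0" "c 7 = 0"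
  shows "(\<exists>j\<in>{1,5,2,6}. 0 < c j \<and> (N < 2*(c 1 + c 2 + c 3 + c 4) \<longleftrightarrow> 1 \<le> j \<and> j \<le> 4) \<and> (N < 2*(c 2 + c 3 + c 4 + c 5) \<longleftrightarrow> 2 \<le> j \<and> j \<le> 5) \<and> (N < 2*(c 3 + c 4 + c 5 + c 6) \<longleftrightarrow> 3 \<le> j \<and> j \<le> 6) \<and> (N < 2*(c 4 + c 5 + c 6 + c 7) \<longleftrightarrow> 4 \<le> j \<and> j \<le> 7))"
  using assms(1,2) assms(7-) assms(3-6) by (elim disjE conjE; simp; linarith)

lemma core_12:
  fixes c :: "nat \<Rightarrow> nat"
  assumes "N = c 0 + c 1 + c 2 + c 3 + c 4 + c 5 + c 6 + c 7" "0 < N"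
   "N < 2*(c 1 + c 2 + c 3 + c 4) \<or> (\<not> N < 2*(c 1 + c 2 + c 3 + c 4) \<and> 2*(c 1 + c 2 + c 3 + c 4) < N)"
   "N < 2*(c 2 + c 3 + c 4 + c 5) \<or> (\<not> N < 2*(c 2 + c 3 + c 4 + c 5) \<and> 2*(c 2 + c 3 + c 4 + c 5) < N)"
   "N < 2*(c 3 + c 4 + c 5 + c 6) \<or> (\<not> N < 2*(c 3 + c 4 + c 5 + c 6) \<and> 2*(c 3 + c 4 + c 5 + c 6) < N)"
   "N < 2*(c 4 + c 5 + c 6 + c 7) \<or> (\<not> N < 2*(c 4 + c 5 + c 6 + c 7) \<and> 2*(c 4 + c 5 + c 6 + c 7) < N)" "c 0 = 0" "c 2 = 0" "c 4 = 0" "c 6 = 0"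
  shows "(\<exists>j\<in>{1,5,3,7}. 0 < c j \<and> (N < 2*(c 1 + c 2 + c 3 + c 4) \<longleftrightarrow> 1 \<le> j \<and> j \<le> 4) \<and> (N < 2*(c 2 + c 3 + c 4 + c 5) \<longleftrightarrow> 2 \<le> j \<and> j \<le> 5) \<and> (N < 2*(c 3 + c 4 + c 5 + c 6) \<longleftrightarrow> 3 \<le> j \<and> j \<le> 6) \<and> (N < 2*(c 4 + c 5 + c 6 + c 7) \<longleftrightarrow> 4 \<le> j \<and> j \<le> 7))"
  using assms(1,2) assms(7-) assms(3-6) by (elim disjE conjE; simp; linarith)

lemma core_13:
  fixes c :: "nat \<Rightarrow> nat"
  assumes "N = c 0 + c 1 + c 2 + c 3 + c 4 + c 5 + c 6 + c 7" "0 < N"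
   "N < 2*(c 1 + c 2 + c 3 + c 4) \<or> (\<not> N < 2*(c 1 + c 2 + c 3 + c 4) \<and> 2*(c 1 + c 2 + c 3 + c 4) < N)"
   "N < 2*(c 2 + c 3 + c 4 + c 5) \<or> (\<not> N < 2*(c 2 + c 3 + c 4 + c 5) \<and> 2*(c 2 + c 3 + c 4 + c 5) < N)"
   "N < 2*(c 3 + c 4 + c 5 + c 6) \<or> (\<not> N < 2*(c 3 + c 4 + c 5 + c 6) \<and> 2*(c 3 + c 4 + c 5 + c 6) < N)"
   "N < 2*(c 4 + c 5 + c 6 + c 7) \<or> (\<not> N < 2*(c 4 + c 5 + c 6 + c 7) \<and> 2*(c 4 + c 5 + c 6 + c 7) < N)" "c 0 = 0" "c 1 = 0" "c 4 = 0" "c 5 = 0"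
  shows "(\<exists>j\<in>{2,6,3,7}. 0 < c j \<and> (N < 2*(c 1 + c 2 + c 3 + c 4) \<longleftrightarrow> 1 \<le> j \<and> j \<le> 4) \<and> (N < 2*(c 2 + c 3 + c 4 + c 5) \<longleftrightarrow> 2 \<le> j \<and> j \<le> 5) \<and> (N < 2*(c 3 + c 4 + c 5 + c 6) \<longleftrightarrow> 3 \<le> j \<and> j \<le> 6) \<and> (N < 2*(c 4 + c 5 + c 6 + c 7) \<longleftrightarrow> 4 \<le> j \<and> j \<le> 7))"
  using assms(1,2) assms(7-) assms(3-6) by (elim disjE conjE; simp; linarith)



lemma all8: "(\<forall>i<8. P i) \<longleftrightarrow> P 0 \<and> P 1 \<and> P 2 \<and> P 3 \<and> P 4 \<and> P 5 \<and> P 6 \<and> P (7::nat)"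
proof -
  have e: "(\<exists>i<8. Q i) \<longleftrightarrow> Q 0 \<or> Q 1 \<or> Q 2 \<or> Q 3 \<or> Q 4 \<or> Q 5 \<or> Q 6 \<or> Q (7::nat)" for Q
    unfolding less8 by auto
  show ?thesis using e[of "\<lambda>i. \<not> P i"] by blast
qed

lemma sum8: "(\<Sum>i<(8::nat). f i) = f 0 + f 1 + f 2 + f 3 + f 4 + f 5 + f 6 + (f 7 :: nat)"
  by (simp add: eval_nat_numeral)

lemma count:
  assumes "finite V" "\<forall>v\<in>V. \<exists>i<8. T v = wheel i"
  shows "card {v\<in>V. P (T v)} = (\<Sum>i<8. if P (wheel i) then card {v\<in>V. T v = wheel i} else 0)"
proof -
  have U: "{v\<in>V. P (T v)} = (\<Union>i\<in>{i\<in>{..<8}. P (wheel i)}. {v\<in>V. T v = wheel i})"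
  proof (intro equalityI subsetI)
    fix v assume v: "v \<in> {v\<in>V. P (T v)}"
    then obtain i where i: "i < 8" "T v = wheel i" using assms(2) by blast
    then show "v \<in> (\<Union>i\<in>{i\<in>{..<8}. P (wheel i)}. {v\<in>V. T v = wheel i})" using v by auto
  qed auto
  have "card {v\<in>V. P (T v)} = (\<Sum>i\<in>{i\<in>{..<8}. P (wheel i)}. card {v\<in>V. T v = wheel i})"
    unfolding U
  proof (rule card_UN_disjoint)
    show "finite {i\<in>{..<8::nat}. P (wheel i)}" by simp
    show "\<forall>i\<in>{i\<in>{..<8}. P (wheel i)}. finite {v\<in>V. T v = wheel i}" using assms(1) by simp
    show "\<forall>i\<in>{i\<in>{..<8}. P (wheel i)}. \<forall>j\<in>{i\<in>{..<8}. P (wheel i)}. i \<noteq> j \<longrightarrow>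
        {v\<in>V. T v = wheel i} \<inter> {v\<in>V. T v = wheel j} = {}"
    proof (intro ballI impI)
      fix i j assume "i \<in> {i\<in>{..<8}. P (wheel i)}" "j \<in> {i\<in>{..<8}. P (wheel i)}" "i \<noteq> j"
      then have "wheel i \<noteq> wheel j" using wheel_inj[of i j] by simp
      then show "{v\<in>V. T v = wheel i} \<inter> {v\<in>V. T v = wheel j} = {}" by blast
    qed
  qed
  also have "\<dots> = (\<Sum>i<8. if P (wheel i) then card {v\<in>V. T v = wheel i} else 0)"
    by (rule sum.inter_filter) simp
  finally show ?thesis .
qed


lemma core_all:
  fixes c :: "nat \<Rightarrow> nat"
  assumes "N = c 0 + c 1 + c 2 + c 3 + c 4 + c 5 + c 6 + c 7" "0 < N"
   "N < 2*(c 1 + c 2 + c 3 + c 4) \<or> (\<not> N < 2*(c 1 + c 2 + c 3 + c 4) \<and> 2*(c 1 + c 2 + c 3 + c 4) < N)"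
   "N < 2*(c 2 + c 3 + c 4 + c 5) \<or> (\<not> N < 2*(c 2 + c 3 + c 4 + c 5) \<and> 2*(c 2 + c 3 + c 4 + c 5) < N)"
   "N < 2*(c 3 + c 4 + c 5 + c 6) \<or> (\<not> N < 2*(c 3 + c 4 + c 5 + c 6) \<and> 2*(c 3 + c 4 + c 5 + c 6) < N)"
   "N < 2*(c 4 + c 5 + c 6 + c 7) \<or> (\<not> N < 2*(c 4 + c 5 + c 6 + c 7) \<and> 2*(c 4 + c 5 + c 6 + c 7) < N)"
  shows "\<forall>J\<in>TIdx \<union> TIIdx. (\<forall>i<8. i \<notin> J \<longrightarrow> c i = 0) \<longrightarrow>
    (\<exists>j\<in>J. 0 < c j \<and> (N < 2*(c 1 + c 2 + c 3 + c 4) \<longleftrightarrow> 1 \<le> j \<and> j \<le> 4) \<and> (N < 2*(c 2 + c 3 + c 4 + c 5) \<longleftrightarrow> 2 \<le> j \<and> j \<le> 5) \<and> (N < 2*(c 3 + c 4 + c 5 + c 6) \<longleftrightarrow> 3 \<le> j \<and> j \<le> 6) \<and> (N < 2*(c 4 + c 5 + c 6 + c 7) \<longleftrightarrow> 4 \<le> j \<and> j \<le> 7))"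
  unfolding TIdx_def TIIdx_def
  apply (simp only: ball_simps Un_insert_left Un_empty_left simp_thms)
  apply (intro conjI impI)
  apply (rule core_0[OF assms]; simp)
  apply (rule core_1[OF assms]; simp)
  apply (rule core_2[OF assms]; simp)
  apply (rule core_3[OF assms]; simp)
  apply (rule core_4[OF assms]; simp)
  apply (rule core_5[OF assms]; simp)
  apply (rule core_6[OF assms]; simp)
  apply (rule core_7[OF assms]; simp)
  apply (rule core_8[OF assms]; simp)
  apply (rule core_9[OF assms]; simp)
  apply (rule core_10[OF assms]; simp)
  apply (rule core_11[OF assms]; simp)
  apply (rule core_12[OF assms]; simp)
  apply (rule core_13[OF assms]; simp)
  done

lemma J8: "J \<in> TIdx \<union> TIIdx \<Longrightarrow> J \<subseteq> {..<8}"
  by (auto simp: TIdx_def TIIdx_def)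

lemma odd_split: "odd (N::nat) \<Longrightarrow> N < 2*x \<or> (\<not> N < 2*x \<and> 2*x < N)"
proof -
  assume "odd N"
  then have "N \<noteq> 2*x" by auto
  then show ?thesis by linarith
qed

lemma part2:
  assumes "J \<in> TIdx \<union> TIIdx" "finite V" "odd (card V)" "\<forall>v\<in>V. T v \<in> wheel ` J"
  shows "\<exists>w\<in>V. sm V T = T w"
proof -
  define c where "c i = card {v\<in>V. T v = wheel i}" for i
  define N where "N = card V"
  have TV: "\<forall>v\<in>V. \<exists>i<8. T v = wheel i" using assms(4) J8[OF assms(1)] by blast
  note cnt = count[OF assms(2) TV, folded c_def]
  have hN: "N = c 0 + c 1 + c 2 + c 3 + c 4 + c 5 + c 6 + c 7"
    using cnt[of "\<lambda>_. True"] by (simp add: sum8 N_def)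
  have N0: "0 < N" using assms(3) N_def by (auto intro: odd_pos)
  have S1: "card {v\<in>V. t123 \<in> T v} = c 1 + c 2 + c 3 + c 4"
    using cnt[of "\<lambda>X. t123 \<in> X"] by (simp add: sum8 wheel_vals t_distinct)
  have S2: "card {v\<in>V. t124 \<in> T v} = c 2 + c 3 + c 4 + c 5"
    using cnt[of "\<lambda>X. t124 \<in> X"] by (simp add: sum8 wheel_vals t_distinct)
  have S3: "card {v\<in>V. t134 \<in> T v} = c 3 + c 4 + c 5 + c 6"
    using cnt[of "\<lambda>X. t134 \<in> X"] by (simp add: sum8 wheel_vals t_distinct)
  have S4: "card {v\<in>V. t234 \<in> T v} = c 4 + c 5 + c 6 + c 7"
    using cnt[of "\<lambda>X. t234 \<in> X"] by (simp add: sum8 wheel_vals t_distinct)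
  have zeros: "\<forall>i<8. i \<notin> J \<longrightarrow> c i = 0"
  proof (intro allI impI)
    fix i assume i: "i < 8" "i \<notin> J"
    have E: "{v\<in>V. T v = wheel i} = {}"
    proof (rule ccontr)
      assume "{v\<in>V. T v = wheel i} \<noteq> {}"
      then obtain v where v: "v \<in> V" "T v = wheel i" by blast
      then obtain j where j: "j \<in> J" "T v = wheel j" using assms(4) by blast
      have "j < 8" using j(1) J8[OF assms(1)] by auto
      then have "i = j" using wheel_inj[OF i(1) \<open>j < 8\<close>] v(2) j(2) by simp
      then show False using i(2) j(1) by simp
    qed
    show "c i = 0" unfolding c_def E by simp
  qed
  have oddN: "odd N" using assms(3) N_def by simp
  obtain j where j: "j \<in> J" "0 < c j"
    "N < 2*(c 1 + c 2 + c 3 + c 4) \<longleftrightarrow> 1 \<le> j \<and> j \<le> 4"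
    "N < 2*(c 2 + c 3 + c 4 + c 5) \<longleftrightarrow> 2 \<le> j \<and> j \<le> 5"
    "N < 2*(c 3 + c 4 + c 5 + c 6) \<longleftrightarrow> 3 \<le> j \<and> j \<le> 6"
    "N < 2*(c 4 + c 5 + c 6 + c 7) \<longleftrightarrow> 4 \<le> j \<and> j \<le> 7"
    using core_all[OF hN N0 odd_split[OF oddN] odd_split[OF oddN] odd_split[OF oddN] odd_split[OF oddN]]
      assms(1) zeros by blast
  have j8: "j < 8" using j(1) J8[OF assms(1)] by auto
  have "{v\<in>V. T v = wheel j} \<noteq> {}"
  proof
    assume E: "{v\<in>V. T v = wheel j} = {}"
    have "c j = 0" unfolding c_def E by simp
    then show False using j(2) by simp
  qed
  then obtain w where w: "w \<in> V" "T w = wheel j" by blast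
  have "sm V T = wheel j"
  proof (rule sub_Lambda_eq)
    show "sm V T \<subseteq> Lambda" by (auto simp: sm_def)
    show "wheel j \<subseteq> Lambda" by (rule wheel_sub[OF j8])
    show "t123 \<in> sm V T \<longleftrightarrow> t123 \<in> wheel j" using j(3) S1 mem_wheel[OF j8]
      by (simp add: sm_def Lambda_eq N_def)
    show "t124 \<in> sm V T \<longleftrightarrow> t124 \<in> wheel j" using j(4) S2 mem_wheel[OF j8]
      by (simp add: sm_def Lambda_eq N_def)
    show "t134 \<in> sm V T \<longleftrightarrow> t134 \<in> wheel j" using j(5) S3 mem_wheel[OF j8]
      by (simp add: sm_def Lambda_eq N_def)
    show "t234 \<in> sm V T \<longleftrightarrow> t234 \<in> wheel j" using j(6) S4 mem_wheel[OF j8]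
      by (simp add: sm_def Lambda_eq N_def)
  qed
  then show ?thesis using w by auto
qed




lemma wm: "wheel 8 = wheel 0" "wheel 9 = wheel 1" "wheel 10 = wheel 2" "wheel 11 = wheel 3"
  "wheel (Suc (Suc 0)) = wheel 2" "wheel (Suc (Suc (Suc 0))) = wheel 3"
  by (simp_all add: wheel_def wheel_list_def)

lemma set5: "{f j |j. j < (5::nat)} = {f 0, f 1, f 2, f 3, f 4}"
proof -
  have e: "{..<5::nat} = {0,1,2,3,4}" by auto
  have "{f j |j. j < (5::nat)} = f ` {..<5}" by blast
  then show ?thesis unfolding e by simp
qed

lemma ex8: "(\<exists>i<8. Q i) \<longleftrightarrow> Q 0 \<or> Q 1 \<or> Q 2 \<or> Q 3 \<or> Q 4 \<or> Q 5 \<or> Q 6 \<or> Q (7::nat)"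
  unfolding less8 by auto

lemma typeI_iff: "type_I D \<longleftrightarrow> (\<exists>J\<in>TIdx. D = wheel ` J)"
  unfolding type_I_def set5 ex8 TIdx_def by (simp add: wm)

lemma TII_char: "J \<in> TIIdx \<longleftrightarrow> (\<exists>a b. a < b \<and> b < 4 \<and> J = {a, a+4, b, b+4})"
proof -
  have e: "(\<exists>a b. a < b \<and> b < (4::nat) \<and> P a b) \<longleftrightarrow> P 0 1 \<or> P 0 2 \<or> P 0 3 \<or> P 1 2 \<or> P 1 3 \<or> P 2 3" for P
  proof
    assume "\<exists>a b. a < b \<and> b < (4::nat) \<and> P a b"
    then obtain a b where ab: "a < b" "b < (4::nat)" "P a b" by blast
    then have "(a = 0 \<and> b = 1) \<or> (a = 0 \<and> b = 2) \<or> (a = 0 \<and> b = 3) \<or> (a = 1 \<and> b = 2) \<or> (a = 1 \<and> b = 3) \<or> (a = 2 \<and> b = 3)" by arith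
    then show "P 0 1 \<or> P 0 2 \<or> P 0 3 \<or> P 1 2 \<or> P 1 3 \<or> P 2 3" using ab(3) by auto
  next
    assume "P 0 1 \<or> P 0 2 \<or> P 0 3 \<or> P 1 2 \<or> P 1 3 \<or> P 2 3"
    then show "\<exists>a b. a < b \<and> b < (4::nat) \<and> P a b"
      apply (elim disjE)
      apply (rule exI[of _ 0], rule exI[of _ 1], simp)
      apply (rule exI[of _ 0], rule exI[of _ 2], simp)
      apply (rule exI[of _ 0], rule exI[of _ 3], simp)
      apply (rule exI[of _ 1], rule exI[of _ 2], simp)
      apply (rule exI[of _ 1], rule exI[of _ 3], simp)
      apply (rule exI[of _ 2], rule exI[of _ 3], simp)
      done
  qed
  show ?thesis unfolding e TIIdx_def by simp
qed

lemma pair4: "(i::nat) < 8 \<Longrightarrow> {i, (i + 4) mod 8} = {i mod 4, i mod 4 + 4}"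
  unfolding less8 by (elim disjE; simp add: insert_commute)

lemma inj_wheel: "inj_on wheel {..<8}"
proof (rule inj_onI)
  fix x y assume "x \<in> {..<8::nat}" "y \<in> {..<8::nat}" "wheel x = wheel y"
  then show "x = y" using wheel_inj[of x y] by simp
qed

lemma typeII_iff: "type_II D \<longleftrightarrow> (\<exists>J\<in>TIIdx. D = wheel ` J)"
proof
  assume "type_II D"
  then obtain T T' where TT: "is_tiling T" "is_tiling T'" "{T, Lambda - T} \<noteq> {T', Lambda - T'}"
      "D = {T, Lambda - T} \<union> {T', Lambda - T'}" unfolding type_II_def by blast
  obtain i where i: "i < 8" "T = wheel i" using TT(1) by (auto simp: tiling_iff)
  obtain k where k: "k < 8" "T' = wheel k" using TT(2) by (auto simp: tiling_iff)
  define a where "a = i mod 4"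
  define b where "b = k mod 4"
  have "{T, Lambda - T} = wheel ` {i, (i+4) mod 8}" using i compl_wheel[OF i(1)] by simp
  also have "\<dots> = wheel ` {a, a+4}" using pair4[OF i(1)] a_def by simp
  finally have A: "{T, Lambda - T} = wheel ` {a, a+4}" .
  have "{T', Lambda - T'} = wheel ` {k, (k+4) mod 8}" using k compl_wheel[OF k(1)] by simp
  also have "\<dots> = wheel ` {b, b+4}" using pair4[OF k(1)] b_def by simp
  finally have B: "{T', Lambda - T'} = wheel ` {b, b+4}" .
  have ab: "a \<noteq> b"
  proof
    assume "a = b"
    then have "{T, Lambda - T} = {T', Lambda - T'}" by (simp only: A B)
    then show False using TT(3) by blast
  qed
  have a4: "a < 4" "b < 4" unfolding a_def b_def by auto
  have U: "{a, a+4} \<union> {b, b+4} = {a, a+4, b, b+4}" by auto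
  have "D = wheel ` ({a, a+4} \<union> {b, b+4})" using TT(4) A B by (simp only: image_Un)
  then have D: "D = wheel ` {a, a+4, b, b+4}" by (simp only: U)
  show "\<exists>J\<in>TIIdx. D = wheel ` J"
  proof (cases "a < b")
    case True
    have "{a, a+4, b, b+4} \<in> TIIdx" unfolding TII_char
      by (rule exI[of _ a], rule exI[of _ b]) (simp add: True a4)
    then show ?thesis using D by (rule bexI[rotated])
  next
    case False
    then have "b < a" using ab by arith
    then have "{b, b+4, a, a+4} \<in> TIIdx" unfolding TII_char
      by (intro exI[of _ b] exI[of _ a]) (simp add: a4)
    moreover have "{b, b+4, a, a+4} = {a, a+4, b, b+4}" by (simp add: insert_commute)
    ultimately show ?thesis using D by (intro bexI[of _ "{b, b+4, a, a+4}"]) simp_all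
  qed
next
  assume "\<exists>J\<in>TIIdx. D = wheel ` J"
  then obtain J where J: "J \<in> TIIdx" "D = wheel ` J" by blast
  then obtain a b where ab0: "a < b" "b < 4" "J = {a, a+4, b, b+4}" unfolding TII_char by blast
  have ab: "a < b" "b < 4" "D = wheel ` {a, a+4, b, b+4}" using ab0 J(2) by simp_all
  have a8: "a < 8" "b < 8" "a + 4 < 8" "b + 4 < 8" using ab by auto
  have ca: "Lambda - wheel a = wheel (a + 4)" using compl_wheel[OF a8(1)] ab by simp
  have cb: "Lambda - wheel b = wheel (b + 4)" using compl_wheel[OF a8(2)] ab by simp
  have ne1: "wheel b \<noteq> wheel a" using wheel_inj[OF a8(2) a8(1)] ab by simp
  have ne2: "wheel b \<noteq> wheel (a + 4)" using wheel_inj[OF a8(2) a8(3)] ab by simp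
  have "{wheel a, Lambda - wheel a} \<noteq> {wheel b, Lambda - wheel b}"
  proof
    assume "{wheel a, Lambda - wheel a} = {wheel b, Lambda - wheel b}"
    moreover have "wheel b \<in> {wheel b, Lambda - wheel b}" by simp
    ultimately have "wheel b \<in> {wheel a, Lambda - wheel a}" by simp
    then have "wheel b \<in> {wheel a, wheel (a + 4)}" using ca by simp
    then show False using ne1 ne2 by auto
  qed
  moreover have "D = {wheel a, Lambda - wheel a} \<union> {wheel b, Lambda - wheel b}"
  proof -
    have u: "{x, y} \<union> {z, w} = {x, y, z, w}" for x y z w :: "nat set set" by auto
    show ?thesis unfolding ca cb u ab(3) by simp
  qed
  moreover have "is_tiling (wheel a)" "is_tiling (wheel b)" unfolding tiling_iff
    using a8(1,2) by blast+
  ultimately show "type_II D" unfolding type_II_def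
    by (intro exI[of _ "wheel a"] exI[of _ "wheel b"]) (simp only: simp_thms)
qed

lemma bad_general:
  assumes "X \<in> D" "Y \<in> D" "Z \<in> D" "\<not> is_tiling (sm {0,1,2::nat} (\<lambda>v. if v = 0 then X else if v = 1 then Y else Z))"
  shows "\<not> condorcet_super_domain D"
proof
  let ?T = "\<lambda>v::nat. if v = 0 then X else if v = 1 then Y else Z"
  assume "condorcet_super_domain D"
  then have "\<forall>(V::nat set) T. finite V \<and> odd (card V) \<and> (\<forall>v\<in>V. T v \<in> D) \<longrightarrow> is_tiling (sm V T)"
    by (simp add: condorcet_super_domain_def)
  then have H: "finite {0,1,2::nat} \<and> odd (card {0,1,2::nat}) \<and> (\<forall>v\<in>{0,1,2::nat}. ?T v \<in> D) \<longrightarrow> is_tiling (sm {0,1,2::nat} ?T)"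
    by (rule spec[OF spec[where x="{0,1,2::nat}"]])
  have "finite {0,1,2::nat} \<and> odd (card {0,1,2::nat}) \<and> (\<forall>v\<in>{0,1,2::nat}. ?T v \<in> D)"
    using assms(1-3) by simp
  then have "is_tiling (sm {0,1,2::nat} ?T)" using H by (rule rev_mp)
  then show False using assms(4) by (rule notE[rotated])
qed


lemma bad_0_2_5: "wheel 0 \<in> D \<Longrightarrow> wheel 2 \<in> D \<Longrightarrow> wheel 5 \<in> D \<Longrightarrow> \<not> condorcet_super_domain D"
proof -
  assume h: "wheel 0 \<in> D" "wheel 2 \<in> D" "wheel 5 \<in> D"
  let ?T = "\<lambda>v::nat. if v = 0 then wheel 0 else if v = 1 then wheel 2 else wheel 5"
  have m: "t \<in> sm {0,1,2} ?T \<longleftrightarrow> t \<in> Lambda \<and> (3::nat) < 2 * ((if t \<in> wheel 0 then 1 else 0) + (if t \<in> wheel 2 then 1 else 0) + (if t \<in> wheel 5 then 1 else 0))" for t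
    unfolding sm_def card3 by simp
  have b0: "t123 \<in> sm {0,1,2} ?T \<longleftrightarrow> False" unfolding m by (simp add: Lambda_eq wheel_vals t_distinct)
  have b1: "t124 \<in> sm {0,1,2} ?T \<longleftrightarrow> True" unfolding m by (simp add: Lambda_eq wheel_vals t_distinct)
  have b2: "t134 \<in> sm {0,1,2} ?T \<longleftrightarrow> False" unfolding m by (simp add: Lambda_eq wheel_vals t_distinct)
  have b3: "t234 \<in> sm {0,1,2} ?T \<longleftrightarrow> False" unfolding m by (simp add: Lambda_eq wheel_vals t_distinct)
  have "\<not> is_tiling (sm {0,1,2} ?T)"
  proof
    assume "is_tiling (sm {0,1,2} ?T)"
    then obtain i where i: "i < 8" "sm {0,1,2} ?T = wheel i" unfolding tiling_iff by blast
    have c0: "(1 \<le> i \<and> i \<le> 4) \<longleftrightarrow> False" using b0 mem_wheel(1)[OF i(1)] i(2) by simp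
    have c1: "(2 \<le> i \<and> i \<le> 5) \<longleftrightarrow> True" using b1 mem_wheel(2)[OF i(1)] i(2) by simp
    have c2: "(3 \<le> i \<and> i \<le> 6) \<longleftrightarrow> False" using b2 mem_wheel(3)[OF i(1)] i(2) by simp
    have c3: "(4 \<le> i \<and> i \<le> 7) \<longleftrightarrow> False" using b3 mem_wheel(4)[OF i(1)] i(2) by simp
    show False using c0 c1 c2 c3 i(1) by arith
  qed
  then show ?thesis using bad_general[OF h] by blast
qed

lemma bad_1_3_6: "wheel 1 \<in> D \<Longrightarrow> wheel 3 \<in> D \<Longrightarrow> wheel 6 \<in> D \<Longrightarrow> \<not> condorcet_super_domain D"
proof -
  assume h: "wheel 1 \<in> D" "wheel 3 \<in> D" "wheel 6 \<in> D"
  let ?T = "\<lambda>v::nat. if v = 0 then wheel 1 else if v = 1 then wheel 3 else wheel 6"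
  have m: "t \<in> sm {0,1,2} ?T \<longleftrightarrow> t \<in> Lambda \<and> (3::nat) < 2 * ((if t \<in> wheel 1 then 1 else 0) + (if t \<in> wheel 3 then 1 else 0) + (if t \<in> wheel 6 then 1 else 0))" for t
    unfolding sm_def card3 by simp
  have b0: "t123 \<in> sm {0,1,2} ?T \<longleftrightarrow> True" unfolding m by (simp add: Lambda_eq wheel_vals t_distinct)
  have b1: "t124 \<in> sm {0,1,2} ?T \<longleftrightarrow> False" unfolding m by (simp add: Lambda_eq wheel_vals t_distinct)
  have b2: "t134 \<in> sm {0,1,2} ?T \<longleftrightarrow> True" unfolding m by (simp add: Lambda_eq wheel_vals t_distinct)
  have b3: "t234 \<in> sm {0,1,2} ?T \<longleftrightarrow> False" unfolding m by (simp add: Lambda_eq wheel_vals t_distinct)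
  have "\<not> is_tiling (sm {0,1,2} ?T)"
  proof
    assume "is_tiling (sm {0,1,2} ?T)"
    then obtain i where i: "i < 8" "sm {0,1,2} ?T = wheel i" unfolding tiling_iff by blast
    have c0: "(1 \<le> i \<and> i \<le> 4) \<longleftrightarrow> True" using b0 mem_wheel(1)[OF i(1)] i(2) by simp
    have c1: "(2 \<le> i \<and> i \<le> 5) \<longleftrightarrow> False" using b1 mem_wheel(2)[OF i(1)] i(2) by simp
    have c2: "(3 \<le> i \<and> i \<le> 6) \<longleftrightarrow> True" using b2 mem_wheel(3)[OF i(1)] i(2) by simp
    have c3: "(4 \<le> i \<and> i \<le> 7) \<longleftrightarrow> False" using b3 mem_wheel(4)[OF i(1)] i(2) by simp
    show False using c0 c1 c2 c3 i(1) by arith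
  qed
  then show ?thesis using bad_general[OF h] by blast
qed

lemma bad_2_4_7: "wheel 2 \<in> D \<Longrightarrow> wheel 4 \<in> D \<Longrightarrow> wheel 7 \<in> D \<Longrightarrow> \<not> condorcet_super_domain D"
proof -
  assume h: "wheel 2 \<in> D" "wheel 4 \<in> D" "wheel 7 \<in> D"
  let ?T = "\<lambda>v::nat. if v = 0 then wheel 2 else if v = 1 then wheel 4 else wheel 7"
  have m: "t \<in> sm {0,1,2} ?T \<longleftrightarrow> t \<in> Lambda \<and> (3::nat) < 2 * ((if t \<in> wheel 2 then 1 else 0) + (if t \<in> wheel 4 then 1 else 0) + (if t \<in> wheel 7 then 1 else 0))" for t
    unfolding sm_def card3 by simp
  have b0: "t123 \<in> sm {0,1,2} ?T \<longleftrightarrow> True" unfolding m by (simp add: Lambda_eq wheel_vals t_distinct)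
  have b1: "t124 \<in> sm {0,1,2} ?T \<longleftrightarrow> True" unfolding m by (simp add: Lambda_eq wheel_vals t_distinct)
  have b2: "t134 \<in> sm {0,1,2} ?T \<longleftrightarrow> False" unfolding m by (simp add: Lambda_eq wheel_vals t_distinct)
  have b3: "t234 \<in> sm {0,1,2} ?T \<longleftrightarrow> True" unfolding m by (simp add: Lambda_eq wheel_vals t_distinct)
  have "\<not> is_tiling (sm {0,1,2} ?T)"
  proof
    assume "is_tiling (sm {0,1,2} ?T)"
    then obtain i where i: "i < 8" "sm {0,1,2} ?T = wheel i" unfolding tiling_iff by blast
    have c0: "(1 \<le> i \<and> i \<le> 4) \<longleftrightarrow> True" using b0 mem_wheel(1)[OF i(1)] i(2) by simp
    have c1: "(2 \<le> i \<and> i \<le> 5) \<longleftrightarrow> True" using b1 mem_wheel(2)[OF i(1)] i(2) by simp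
    have c2: "(3 \<le> i \<and> i \<le> 6) \<longleftrightarrow> False" using b2 mem_wheel(3)[OF i(1)] i(2) by simp
    have c3: "(4 \<le> i \<and> i \<le> 7) \<longleftrightarrow> True" using b3 mem_wheel(4)[OF i(1)] i(2) by simp
    show False using c0 c1 c2 c3 i(1) by arith
  qed
  then show ?thesis using bad_general[OF h] by blast
qed

lemma bad_3_5_0: "wheel 3 \<in> D \<Longrightarrow> wheel 5 \<in> D \<Longrightarrow> wheel 0 \<in> D \<Longrightarrow> \<not> condorcet_super_domain D"
proof -
  assume h: "wheel 3 \<in> D" "wheel 5 \<in> D" "wheel 0 \<in> D"
  let ?T = "\<lambda>v::nat. if v = 0 then wheel 3 else if v = 1 then wheel 5 else wheel 0"
  have m: "t \<in> sm {0,1,2} ?T \<longleftrightarrow> t \<in> Lambda \<and> (3::nat) < 2 * ((if t \<in> wheel 3 then 1 else 0) + (if t \<in> wheel 5 then 1 else 0) + (if t \<in> wheel 0 then 1 else 0))" for t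
    unfolding sm_def card3 by simp
  have b0: "t123 \<in> sm {0,1,2} ?T \<longleftrightarrow> False" unfolding m by (simp add: Lambda_eq wheel_vals t_distinct)
  have b1: "t124 \<in> sm {0,1,2} ?T \<longleftrightarrow> True" unfolding m by (simp add: Lambda_eq wheel_vals t_distinct)
  have b2: "t134 \<in> sm {0,1,2} ?T \<longleftrightarrow> True" unfolding m by (simp add: Lambda_eq wheel_vals t_distinct)
  have b3: "t234 \<in> sm {0,1,2} ?T \<longleftrightarrow> False" unfolding m by (simp add: Lambda_eq wheel_vals t_distinct)
  have "\<not> is_tiling (sm {0,1,2} ?T)"
  proof
    assume "is_tiling (sm {0,1,2} ?T)"
    then obtain i where i: "i < 8" "sm {0,1,2} ?T = wheel i" unfolding tiling_iff by blast
    have c0: "(1 \<le> i \<and> i \<le> 4) \<longleftrightarrow> False" using b0 mem_wheel(1)[OF i(1)] i(2) by simp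
    have c1: "(2 \<le> i \<and> i \<le> 5) \<longleftrightarrow> True" using b1 mem_wheel(2)[OF i(1)] i(2) by simp
    have c2: "(3 \<le> i \<and> i \<le> 6) \<longleftrightarrow> True" using b2 mem_wheel(3)[OF i(1)] i(2) by simp
    have c3: "(4 \<le> i \<and> i \<le> 7) \<longleftrightarrow> False" using b3 mem_wheel(4)[OF i(1)] i(2) by simp
    show False using c0 c1 c2 c3 i(1) by arith
  qed
  then show ?thesis using bad_general[OF h] by blast
qed

lemma bad_4_6_1: "wheel 4 \<in> D \<Longrightarrow> wheel 6 \<in> D \<Longrightarrow> wheel 1 \<in> D \<Longrightarrow> \<not> condorcet_super_domain D"
proof -
  assume h: "wheel 4 \<in> D" "wheel 6 \<in> D" "wheel 1 \<in> D"
  let ?T = "\<lambda>v::nat. if v = 0 then wheel 4 else if v = 1 then wheel 6 else wheel 1"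
  have m: "t \<in> sm {0,1,2} ?T \<longleftrightarrow> t \<in> Lambda \<and> (3::nat) < 2 * ((if t \<in> wheel 4 then 1 else 0) + (if t \<in> wheel 6 then 1 else 0) + (if t \<in> wheel 1 then 1 else 0))" for t
    unfolding sm_def card3 by simp
  have b0: "t123 \<in> sm {0,1,2} ?T \<longleftrightarrow> True" unfolding m by (simp add: Lambda_eq wheel_vals t_distinct)
  have b1: "t124 \<in> sm {0,1,2} ?T \<longleftrightarrow> False" unfolding m by (simp add: Lambda_eq wheel_vals t_distinct)
  have b2: "t134 \<in> sm {0,1,2} ?T \<longleftrightarrow> True" unfolding m by (simp add: Lambda_eq wheel_vals t_distinct)
  have b3: "t234 \<in> sm {0,1,2} ?T \<longleftrightarrow> True" unfolding m by (simp add: Lambda_eq wheel_vals t_distinct)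
  have "\<not> is_tiling (sm {0,1,2} ?T)"
  proof
    assume "is_tiling (sm {0,1,2} ?T)"
    then obtain i where i: "i < 8" "sm {0,1,2} ?T = wheel i" unfolding tiling_iff by blast
    have c0: "(1 \<le> i \<and> i \<le> 4) \<longleftrightarrow> True" using b0 mem_wheel(1)[OF i(1)] i(2) by simp
    have c1: "(2 \<le> i \<and> i \<le> 5) \<longleftrightarrow> False" using b1 mem_wheel(2)[OF i(1)] i(2) by simp
    have c2: "(3 \<le> i \<and> i \<le> 6) \<longleftrightarrow> True" using b2 mem_wheel(3)[OF i(1)] i(2) by simp
    have c3: "(4 \<le> i \<and> i \<le> 7) \<longleftrightarrow> True" using b3 mem_wheel(4)[OF i(1)] i(2) by simp
    show False using c0 c1 c2 c3 i(1) by arith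
  qed
  then show ?thesis using bad_general[OF h] by blast
qed

lemma bad_5_7_2: "wheel 5 \<in> D \<Longrightarrow> wheel 7 \<in> D \<Longrightarrow> wheel 2 \<in> D \<Longrightarrow> \<not> condorcet_super_domain D"
proof -
  assume h: "wheel 5 \<in> D" "wheel 7 \<in> D" "wheel 2 \<in> D"
  let ?T = "\<lambda>v::nat. if v = 0 then wheel 5 else if v = 1 then wheel 7 else wheel 2"
  have m: "t \<in> sm {0,1,2} ?T \<longleftrightarrow> t \<in> Lambda \<and> (3::nat) < 2 * ((if t \<in> wheel 5 then 1 else 0) + (if t \<in> wheel 7 then 1 else 0) + (if t \<in> wheel 2 then 1 else 0))" for t
    unfolding sm_def card3 by simp
  have b0: "t123 \<in> sm {0,1,2} ?T \<longleftrightarrow> False" unfolding m by (simp add: Lambda_eq wheel_vals t_distinct)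
  have b1: "t124 \<in> sm {0,1,2} ?T \<longleftrightarrow> True" unfolding m by (simp add: Lambda_eq wheel_vals t_distinct)
  have b2: "t134 \<in> sm {0,1,2} ?T \<longleftrightarrow> False" unfolding m by (simp add: Lambda_eq wheel_vals t_distinct)
  have b3: "t234 \<in> sm {0,1,2} ?T \<longleftrightarrow> True" unfolding m by (simp add: Lambda_eq wheel_vals t_distinct)
  have "\<not> is_tiling (sm {0,1,2} ?T)"
  proof
    assume "is_tiling (sm {0,1,2} ?T)"
    then obtain i where i: "i < 8" "sm {0,1,2} ?T = wheel i" unfolding tiling_iff by blast
    have c0: "(1 \<le> i \<and> i \<le> 4) \<longleftrightarrow> False" using b0 mem_wheel(1)[OF i(1)] i(2) by simp
    have c1: "(2 \<le> i \<and> i \<le> 5) \<longleftrightarrow> True" using b1 mem_wheel(2)[OF i(1)] i(2) by simp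
    have c2: "(3 \<le> i \<and> i \<le> 6) \<longleftrightarrow> False" using b2 mem_wheel(3)[OF i(1)] i(2) by simp
    have c3: "(4 \<le> i \<and> i \<le> 7) \<longleftrightarrow> True" using b3 mem_wheel(4)[OF i(1)] i(2) by simp
    show False using c0 c1 c2 c3 i(1) by arith
  qed
  then show ?thesis using bad_general[OF h] by blast
qed

lemma bad_6_0_3: "wheel 6 \<in> D \<Longrightarrow> wheel 0 \<in> D \<Longrightarrow> wheel 3 \<in> D \<Longrightarrow> \<not> condorcet_super_domain D"
proof -
  assume h: "wheel 6 \<in> D" "wheel 0 \<in> D" "wheel 3 \<in> D"
  let ?T = "\<lambda>v::nat. if v = 0 then wheel 6 else if v = 1 then wheel 0 else wheel 3"
  have m: "t \<in> sm {0,1,2} ?T \<longleftrightarrow> t \<in> Lambda \<and> (3::nat) < 2 * ((if t \<in> wheel 6 then 1 else 0) + (if t \<in> wheel 0 then 1 else 0) + (if t \<in> wheel 3 then 1 else 0))" for t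
    unfolding sm_def card3 by simp
  have b0: "t123 \<in> sm {0,1,2} ?T \<longleftrightarrow> False" unfolding m by (simp add: Lambda_eq wheel_vals t_distinct)
  have b1: "t124 \<in> sm {0,1,2} ?T \<longleftrightarrow> False" unfolding m by (simp add: Lambda_eq wheel_vals t_distinct)
  have b2: "t134 \<in> sm {0,1,2} ?T \<longleftrightarrow> True" unfolding m by (simp add: Lambda_eq wheel_vals t_distinct)
  have b3: "t234 \<in> sm {0,1,2} ?T \<longleftrightarrow> False" unfolding m by (simp add: Lambda_eq wheel_vals t_distinct)
  have "\<not> is_tiling (sm {0,1,2} ?T)"
  proof
    assume "is_tiling (sm {0,1,2} ?T)"
    then obtain i where i: "i < 8" "sm {0,1,2} ?T = wheel i" unfolding tiling_iff by blast
    have c0: "(1 \<le> i \<and> i \<le> 4) \<longleftrightarrow> False" using b0 mem_wheel(1)[OF i(1)] i(2) by simp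
    have c1: "(2 \<le> i \<and> i \<le> 5) \<longleftrightarrow> False" using b1 mem_wheel(2)[OF i(1)] i(2) by simp
    have c2: "(3 \<le> i \<and> i \<le> 6) \<longleftrightarrow> True" using b2 mem_wheel(3)[OF i(1)] i(2) by simp
    have c3: "(4 \<le> i \<and> i \<le> 7) \<longleftrightarrow> False" using b3 mem_wheel(4)[OF i(1)] i(2) by simp
    show False using c0 c1 c2 c3 i(1) by arith
  qed
  then show ?thesis using bad_general[OF h] by blast
qed

lemma bad_7_1_4: "wheel 7 \<in> D \<Longrightarrow> wheel 1 \<in> D \<Longrightarrow> wheel 4 \<in> D \<Longrightarrow> \<not> condorcet_super_domain D"
proof -
  assume h: "wheel 7 \<in> D" "wheel 1 \<in> D" "wheel 4 \<in> D"
  let ?T = "\<lambda>v::nat. if v = 0 then wheel 7 else if v = 1 then wheel 1 else wheel 4"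
  have m: "t \<in> sm {0,1,2} ?T \<longleftrightarrow> t \<in> Lambda \<and> (3::nat) < 2 * ((if t \<in> wheel 7 then 1 else 0) + (if t \<in> wheel 1 then 1 else 0) + (if t \<in> wheel 4 then 1 else 0))" for t
    unfolding sm_def card3 by simp
  have b0: "t123 \<in> sm {0,1,2} ?T \<longleftrightarrow> True" unfolding m by (simp add: Lambda_eq wheel_vals t_distinct)
  have b1: "t124 \<in> sm {0,1,2} ?T \<longleftrightarrow> False" unfolding m by (simp add: Lambda_eq wheel_vals t_distinct)
  have b2: "t134 \<in> sm {0,1,2} ?T \<longleftrightarrow> False" unfolding m by (simp add: Lambda_eq wheel_vals t_distinct)
  have b3: "t234 \<in> sm {0,1,2} ?T \<longleftrightarrow> True" unfolding m by (simp add: Lambda_eq wheel_vals t_distinct)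
  have "\<not> is_tiling (sm {0,1,2} ?T)"
  proof
    assume "is_tiling (sm {0,1,2} ?T)"
    then obtain i where i: "i < 8" "sm {0,1,2} ?T = wheel i" unfolding tiling_iff by blast
    have c0: "(1 \<le> i \<and> i \<le> 4) \<longleftrightarrow> True" using b0 mem_wheel(1)[OF i(1)] i(2) by simp
    have c1: "(2 \<le> i \<and> i \<le> 5) \<longleftrightarrow> False" using b1 mem_wheel(2)[OF i(1)] i(2) by simp
    have c2: "(3 \<le> i \<and> i \<le> 6) \<longleftrightarrow> False" using b2 mem_wheel(3)[OF i(1)] i(2) by simp
    have c3: "(4 \<le> i \<and> i \<le> 7) \<longleftrightarrow> True" using b3 mem_wheel(4)[OF i(1)] i(2) by simp
    show False using c0 c1 c2 c3 i(1) by arith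
  qed
  then show ?thesis using bad_general[OF h] by blast
qed

lemma bool8:
  assumes "\<not>(b0 \<and> b2 \<and> b5)" "\<not>(b1 \<and> b3 \<and> b6)" "\<not>(b2 \<and> b4 \<and> b7)" "\<not>(b3 \<and> b5 \<and> b0)" "\<not>(b4 \<and> b6 \<and> b1)" "\<not>(b5 \<and> b7 \<and> b2)" "\<not>(b6 \<and> b0 \<and> b3)" "\<not>(b7 \<and> b1 \<and> b4)"
  shows "(\<not>b2 \<and> \<not>b3 \<and> \<not>b6 \<and> \<not>b7) \<or> (\<not>b1 \<and> \<not>b3 \<and> \<not>b5 \<and> \<not>b7) \<or> (\<not>b1 \<and> \<not>b2 \<and> \<not>b5 \<and> \<not>b6) \<or> (\<not>b0 \<and> \<not>b3 \<and> \<not>b4 \<and> \<not>b7) \<or> (\<not>b0 \<and> \<not>b2 \<and> \<not>b4 \<and> \<not>b6) \<or> (\<not>b0 \<and> \<not>b1 \<and> \<not>b4 \<and> \<not>b5) \<or> (\<not>b5 \<and> \<not>b6 \<and> \<not>b7) \<or> (\<not>b0 \<and> \<not>b6 \<and> \<not>b7) \<or> (\<not>b0 \<and> \<not>b1 \<and> \<not>b7) \<or> (\<not>b0 \<and> \<not>b1 \<and> \<not>b2) \<or> (\<not>b1 \<and> \<not>b2 \<and> \<not>b3) \<or> (\<not>b2 \<and> \<not>b3 \<and> \<not>b4) \<or> (\<not>b3 \<and> \<not>b4 \<and> \<not>b5) \<or> (\<not>b4 \<and> \<not>b5 \<and> \<not>b6)"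
  using assms by (cases b0; cases b1; cases b2; cases b3; cases b4; cases b5; cases b6; cases b7; simp only: simp_thms)

lemma lemA:
  assumes C: "condorcet_super_domain D"
  shows "\<exists>J\<in>TIdx \<union> TIIdx. D \<subseteq> wheel ` J"
proof -
  have nb0: "\<not>(wheel 0 \<in> D \<and> wheel 2 \<in> D \<and> wheel 5 \<in> D)" using bad_0_2_5 C by blast
  have nb1: "\<not>(wheel 1 \<in> D \<and> wheel 3 \<in> D \<and> wheel 6 \<in> D)" using bad_1_3_6 C by blast
  have nb2: "\<not>(wheel 2 \<in> D \<and> wheel 4 \<in> D \<and> wheel 7 \<in> D)" using bad_2_4_7 C by blast
  have nb3: "\<not>(wheel 3 \<in> D \<and> wheel 5 \<in> D \<and> wheel 0 \<in> D)" using bad_3_5_0 C by blast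
  have nb4: "\<not>(wheel 4 \<in> D \<and> wheel 6 \<in> D \<and> wheel 1 \<in> D)" using bad_4_6_1 C by blast
  have nb5: "\<not>(wheel 5 \<in> D \<and> wheel 7 \<in> D \<and> wheel 2 \<in> D)" using bad_5_7_2 C by blast
  have nb6: "\<not>(wheel 6 \<in> D \<and> wheel 0 \<in> D \<and> wheel 3 \<in> D)" using bad_6_0_3 C by blast
  have nb7: "\<not>(wheel 7 \<in> D \<and> wheel 1 \<in> D \<and> wheel 4 \<in> D)" using bad_7_1_4 C by blast
  have disj: "(wheel 2 \<notin> D \<and> wheel 3 \<notin> D \<and> wheel 6 \<notin> D \<and> wheel 7 \<notin> D) \<or> (wheel 1 \<notin> D \<and> wheel 3 \<notin> D \<and> wheel 5 \<notin> D \<and> wheel 7 \<notin> D) \<or> (wheel 1 \<notin> D \<and> wheel 2 \<notin> D \<and> wheel 5 \<notin> D \<and> wheel 6 \<notin> D) \<or> (wheel 0 \<notin> D \<and> wheel 3 \<notin> D \<and> wheel 4 \<notin> D \<and> wheel 7 \<notin> D) \<or> (wheel 0 \<notin> D \<and> wheel 2 \<notin> D \<and> wheel 4 \<notin> D \<and> wheel 6 \<notin> D) \<or> (wheel 0 \<notin> D \<and> wheel 1 \<notin> D \<and> wheel 4 \<notin> D \<and> wheel 5 \<notin> D) \<or> (wheel 5 \<notin> D \<and> wheel 6 \<notin> D \<and> wheel 7 \<notin> D) \<or> (wheel 0 \<notin> D \<and> wheel 6 \<notin> D \<and> wheel 7 \<notin> D) \<or> (wheel 0 \<notin> D \<and>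 wheel 1 \<notin> D \<and> wheel 7 \<notin> D) \<or> (wheel 0 \<notin> D \<and> wheel 1 \<notin> D \<and> wheel 2 \<notin> D) \<or> (wheel 1 \<notin> D \<and> wheel 2 \<notin> D \<and> wheel 3 \<notin> D) \<or> (wheel 2 \<notin> D \<and> wheel 3 \<notin> D \<and> wheel 4 \<notin> D) \<or> (wheel 3 \<notin> D \<and> wheel 4 \<notin> D \<and> wheel 5 \<notin> D) \<or> (wheel 4 \<notin> D \<and> wheel 5 \<notin> D \<and> wheel 6 \<notin> D)"
    using bool8[OF nb0 nb1 nb2 nb3 nb4 nb5 nb6 nb7] .
  have key: "\<exists>J\<in>TIdx \<union> TIIdx. \<forall>i<8. wheel i \<in> D \<longrightarrow> i \<in> J"
    using disj unfolding TIdx_def TIIdx_def all8 by simp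
  then obtain J where J: "J \<in> TIdx \<union> TIIdx" "\<forall>i<8. wheel i \<in> D \<longrightarrow> i \<in> J" by blast
  have "D \<subseteq> wheel ` J"
  proof
    fix X assume X: "X \<in> D"
    then have "is_tiling X" using C unfolding condorcet_super_domain_def by blast
    then obtain i where i: "i < 8" "X = wheel i" unfolding tiling_iff by blast
    then have "i \<in> J" using J(2) X by blast
    then show "X \<in> wheel ` J" using i(2) by blast
  qed
  then show ?thesis using J(1) by blast
qed

lemma sub_eq_all: "\<forall>J1\<in>TIdx \<union> TIIdx. \<forall>J2\<in>TIdx \<union> TIIdx. J1 \<subseteq> J2 \<longrightarrow> J1 = J2"
  unfolding TIdx_def TIIdx_def by simp

lemma sub_eq:
  assumes "J1 \<in> TIdx \<union> TIIdx" "J2 \<in> TIdx \<union> TIIdx" "wheel ` J1 \<subseteq> wheel ` J2"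
  shows "J1 = J2"
proof -
  have "J1 \<subseteq> J2"
  proof
    fix x assume x: "x \<in> J1"
    then have "wheel x \<in> wheel ` J2" using assms(3) by blast
    moreover have "x \<in> {..<8}" using x J8[OF assms(1)] by blast
    ultimately show "x \<in> J2" using inj_on_image_mem_iff[OF inj_wheel _ J8[OF assms(2)]] by blast
  qed
  then show ?thesis using sub_eq_all assms(1,2) by blast
qed

lemma cond_typ:
  assumes "J \<in> TIdx \<union> TIIdx"
  shows "condorcet_super_domain (wheel ` J)"
  unfolding condorcet_super_domain_def
proof (intro conjI allI impI ballI)
  fix T assume "T \<in> wheel ` J"
  then obtain j where j: "j \<in> J" "T = wheel j" by blast
  have "j < 8" using j(1) J8[OF assms] by blast
  then show "is_tiling T" unfolding tiling_iff using j(2) by blast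
next
  fix V :: "nat set" and T
  assume h: "finite V \<and> odd (card V) \<and> (\<forall>v\<in>V. T v \<in> wheel ` J)"
  then obtain w where w: "w \<in> V" "sm V T = T w" using part2[OF assms] by blast
  then obtain j where j: "j \<in> J" "T w = wheel j" using h by blast
  have "j < 8" using j(1) J8[OF assms] by blast
  then show "is_tiling (sm V T)" unfolding tiling_iff using w(2) j(2) by blast
qed

theorem mainTheorem6:
  shows "(\<forall>D. maximal_condorcet_super_domain D \<longleftrightarrow> type_I D \<or> type_II D) \<and>
         (\<forall>D. type_I D \<or> type_II D \<longrightarrow>
            (\<forall>(V::'v set) (T::'v \<Rightarrow> nat set set).
               finite V \<and> odd (card V) \<and> (\<forall>v\<in>V. T v \<in> D) \<longrightarrow> (\<exists>w\<in>V. sm V T = T w)))"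
proof -
  have typeq: "type_I D \<or> type_II D \<longleftrightarrow> (\<exists>J\<in>TIdx \<union> TIIdx. D = wheel ` J)" for D
    unfolding typeI_iff typeII_iff by blast
  have P1: "maximal_condorcet_super_domain D \<longleftrightarrow> type_I D \<or> type_II D" for D
  proof
    assume M: "maximal_condorcet_super_domain D"
    then have C: "condorcet_super_domain D" unfolding maximal_condorcet_super_domain_def by blast
    obtain J where J: "J \<in> TIdx \<union> TIIdx" "D \<subseteq> wheel ` J" using lemA[OF C] by blast
    have "wheel ` J = D" using M cond_typ[OF J(1)] J(2) unfolding maximal_condorcet_super_domain_def by blast
    then show "type_I D \<or> type_II D" unfolding typeq using J(1) by blast
  next
    assume "type_I D \<or> type_II D"
    then obtain J where J: "J \<in> TIdx \<union> TIIdx" "D = wheel ` J" unfolding typeq by blast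
    have C: "condorcet_super_domain D" using cond_typ[OF J(1)] J(2) by simp
    have "D' = D" if D': "condorcet_super_domain D'" "D \<subseteq> D'" for D'
    proof -
      obtain J' where J': "J' \<in> TIdx \<union> TIIdx" "D' \<subseteq> wheel ` J'" using lemA[OF D'(1)] by blast
      have "wheel ` J \<subseteq> wheel ` J'" using J(2) D'(2) J'(2) by blast
      then have "J = J'" using sub_eq[OF J(1) J'(1)] by blast
      then show "D' = D" using J(2) D'(2) J'(2) by blast
    qed
    then show "maximal_condorcet_super_domain D" unfolding maximal_condorcet_super_domain_def using C by blast
  qed
  have P2: "\<exists>w\<in>V. sm V T = T w"
    if hh: "type_I D \<or> type_II D" "finite V" "odd (card V)" "\<forall>v\<in>V. T v \<in> D"
    for D and V :: "'v set" and T :: "'v \<Rightarrow> nat set set"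
  proof -
    obtain J where J: "J \<in> TIdx \<union> TIIdx" "D = wheel ` J" using hh(1) unfolding typeq by blast
    show ?thesis using part2[OF J(1) hh(2) hh(3)] hh(4) J(2) by blast
  qed
  show ?thesis using P1 P2 by blast
qed


end
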